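(* Let $I(\emptyset)$ denote the quiver with no vertices and no edges, and let $C$ be a quiver. A quiver homomorphism $\varphi : I(\emptyset) \to C$ is mono-essential if and only if $|V(C)|\le 1$ and $|E(C)|\le 1$.
   Context: A quiver is a quadruple $(V,E,\sigma,\tau)$ with $V,E$ sets and $\sigma,\tau : E \to V$ functions. A quiver homomorphism $G \to H$ is a pair $(\phi_V,\phi_E)$ of functions on vertices and edges commuting with sources and targets; composition is componentwise. A quiver homomorphism is a monomorphism (monic) in the category $\mathbf{Quiv}$ if and only if both its vertex and edge maps are injective. A monic homomorphism $\varphi : A \to B$ is mono-essential if for every quiver $C'$ and homomorphism $\alpha : B \to C'$, if $\alpha\circ\varphi$ is monic then $\alpha$ is monic. *)

theory Defs
  imports Main
begin

record ('v, 'e) quiver =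
  verts :: "'v set"
  edges :: "'e set"
  src :: "'e \<Rightarrow> 'v"
  tgt :: "'e \<Rightarrow> 'v"

definition wf_quiver :: "('v, 'e) quiver \<Rightarrow> bool" where
  "wf_quiver Q \<longleftrightarrow> (\<forall>e\<in>edges Q. src Q e \<in> verts Q \<and> tgt Q e \<in> verts Q)"

definition quiver_hom ::
  "('v1, 'e1) quiver \<Rightarrow> ('v2, 'e2) quiver \<Rightarrow> ('v1 \<Rightarrow> 'v2) \<times> ('e1 \<Rightarrow> 'e2) \<Rightarrow> bool" where
  "quiver_hom G H f \<longleftrightarrow>
     (\<forall>v\<in>verts G. fst f v \<in> verts H) \<and>
     (\<forall>e\<in>edges G. snd f e \<in> edges H) \<and>
     (\<forall>e\<in>edges G. fst f (src G e) = src H (snd f e) \<and> fst f (tgt G e) = tgt H (snd f e))"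

definition hom_comp ::
  "('v2 \<Rightarrow> 'v3) \<times> ('e2 \<Rightarrow> 'e3) \<Rightarrow> ('v1 \<Rightarrow> 'v2) \<times> ('e1 \<Rightarrow> 'e2) \<Rightarrow> ('v1 \<Rightarrow> 'v3) \<times> ('e1 \<Rightarrow> 'e3)" where
  "hom_comp g f = (fst g \<circ> fst f, snd g \<circ> snd f)"

definition quiver_monic ::
  "('v1, 'e1) quiver \<Rightarrow> ('v2, 'e2) quiver \<Rightarrow> ('v1 \<Rightarrow> 'v2) \<times> ('e1 \<Rightarrow> 'e2) \<Rightarrow> bool" where
  "quiver_monic G H f \<longleftrightarrow> quiver_hom G H f \<and> inj_on (fst f) (verts G) \<and> inj_on (snd f) (edges G)"

text \<open>Mono-essential, with test quivers C' ranging over quivers with vertex type 'c and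
  edge type 'd (the type parameters are passed explicitly).\<close>
definition mono_essential ::
  "'c itself \<Rightarrow> 'd itself \<Rightarrow> ('v1, 'e1) quiver \<Rightarrow> ('v2, 'e2) quiver \<Rightarrow>
     ('v1 \<Rightarrow> 'v2) \<times> ('e1 \<Rightarrow> 'e2) \<Rightarrow> bool" where
  "mono_essential (_ :: 'c itself) (_ :: 'd itself) A B \<phi> \<longleftrightarrow>
     quiver_monic A B \<phi> \<and>
     (\<forall>(C' :: ('c, 'd) quiver) (\<alpha> :: ('v2 \<Rightarrow> 'c) \<times> ('e2 \<Rightarrow> 'd)).
        wf_quiver C' \<longrightarrow> quiver_hom B C' \<alpha> \<longrightarrow>
        quiver_monic A C' (hom_comp \<alpha> \<phi>) \<longrightarrow> quiver_monic B C' \<alpha>)"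

definition empty_quiver :: "('v, 'e) quiver" where
  "empty_quiver = \<lparr>verts = {}, edges = {}, src = (\<lambda>_. undefined), tgt = (\<lambda>_. undefined)\<rparr>"

end

theory Submission
  imports Defs
begin

lemma const_inj_card:
  assumes "inj_on (\<lambda>_. c) S"
  shows "finite S \<and> card S \<le> 1"
proof -
  have all: "\<forall>x\<in>S. \<forall>y\<in>S. x = y" using assms by (auto simp: inj_on_def)
  show ?thesis
  proof (cases "S = {}")
    case True then show ?thesis by simp
  next
    case False
    then obtain x where "x \<in> S" by blast
    with all have "S = {x}" by blast
    then show ?thesis by simp
  qed
qed

lemma sub_inj:
  assumes "finite S" "card S \<le> 1"
  shows "inj_on f S"
proof -
  have "\<forall>x\<in>S. \<forall>y\<in>S. x = y"
    using assms card_le_Suc0_iff_eq[of S] by simp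
  then show ?thesis by (auto simp: inj_on_def)
qed

theorem mainTheorem3:
  fixes C :: "('v, 'e) quiver" and \<phi> :: "('a \<Rightarrow> 'v) \<times> ('b \<Rightarrow> 'e)"
  assumes "wf_quiver C"
    and "quiver_hom (empty_quiver :: ('a, 'b) quiver) C \<phi>"
  shows "mono_essential TYPE('c) TYPE('d) (empty_quiver :: ('a, 'b) quiver) C \<phi> \<longleftrightarrow>
           (finite (verts C) \<and> card (verts C) \<le> 1 \<and> finite (edges C) \<and> card (edges C) \<le> 1)"
proof
  assume me: "mono_essential TYPE('c) TYPE('d) (empty_quiver :: ('a, 'b) quiver) C \<phi>"
  define C' :: "('c, 'd) quiver" where
    "C' = \<lparr>verts = {undefined}, edges = {undefined}, src = (\<lambda>_. undefined), tgt = (\<lambda>_. undefined)\<rparr>"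
  define \<alpha> :: "('v \<Rightarrow> 'c) \<times> ('e \<Rightarrow> 'd)" where "\<alpha> = ((\<lambda>_. undefined), (\<lambda>_. undefined))"
  have "wf_quiver C'" by (simp add: C'_def wf_quiver_def)
  moreover have "quiver_hom C C' \<alpha>" by (simp add: C'_def \<alpha>_def quiver_hom_def)
  moreover have "quiver_monic (empty_quiver :: ('a, 'b) quiver) C' (hom_comp \<alpha> \<phi>)"
    by (simp add: quiver_monic_def quiver_hom_def empty_quiver_def)
  ultimately have "quiver_monic C C' \<alpha>" using me unfolding mono_essential_def by blast
  then have "inj_on (\<lambda>_. undefined::'c) (verts C)" "inj_on (\<lambda>_. undefined::'d) (edges C)"
    by (simp_all add: quiver_monic_def \<alpha>_def)
  then show "finite (verts C) \<and> card (verts C) \<le> 1 \<and> finite (edges C) \<and> card (edges C) \<le> 1"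
    using const_inj_card[of undefined "verts C"] const_inj_card[of undefined "edges C"] by blast
next
  assume h: "finite (verts C) \<and> card (verts C) \<le> 1 \<and> finite (edges C) \<and> card (edges C) \<le> 1"
  have "quiver_monic (empty_quiver :: ('a, 'b) quiver) C \<phi>"
    using assms(2) by (simp add: quiver_monic_def empty_quiver_def)
  moreover have "\<And>(C' :: ('c, 'd) quiver) (\<alpha> :: ('v \<Rightarrow> 'c) \<times> ('e \<Rightarrow> 'd)).
        quiver_hom C C' \<alpha> \<Longrightarrow> quiver_monic C C' \<alpha>"
  proof -
    fix C' :: "('c, 'd) quiver" and \<alpha> :: "('v \<Rightarrow> 'c) \<times> ('e \<Rightarrow> 'd)"
    assume "quiver_hom C C' \<alpha>"
    moreover have "inj_on (fst \<alpha>) (verts C)" using h by (intro sub_inj) auto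
    moreover have "inj_on (snd \<alpha>) (edges C)" using h by (intro sub_inj) auto
    ultimately show "quiver_monic C C' \<alpha>" unfolding quiver_monic_def by blast
  qed
  ultimately show "mono_essential TYPE('c) TYPE('d) (empty_quiver :: ('a, 'b) quiver) C \<phi>"
    unfolding mono_essential_def by simp
qed

end
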